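(* Assume $A$ contains at least one prime element and that $U(A)$ is finite. Then every $x\in A\setminus(U(A)\cup\{0\})$ such that $\mathcal D(x)$ is finite has a prime divisor, i.e. there is a prime $p\in A$ with $p\mid x$.
   Context: Let $\mathbb F$ be a subfield of $\mathbb C$ with a norm (absolute value) $\|\cdot\|_{\mathbb F}$, and $A$ a subring of $\mathbb F$ containing $1$ (hence an integral domain). $U(A)$ is the unit group of $A$; $d\mid x$ means $x=dc$ for some $c\in A$; $\mathcal D(x)=\{d\in A:d\mid x\}$; $xU(A)=\{xu:u\in U(A)\}$. $N:A\to\mathbb F\cap\mathbb R$ is a map with $N(a)\neq0$ for all nonzero $a\in A$ and satisfying: for all $x\in A$, $N(x)\in A$, $\mathcal D(N(x))=\mathcal D(x)$ and $N(N(x))=N(x)$; for all $x,y\in A$ there is $z\in A$ with $N(x)+N(y)=N(z)$; $N(-x)=N(x)$; $N(xy)=N(x)N(y)$; $\|N(x)\|_{\mathbb F}=N(x)$; for every $x\ne0$ there is $x'\in\mathbb F\cap\mathbb R$ with $N(x)^2=xx'\in A$. An element $p\in A$ is irreducible if $p\notin U(A)\cup\{0\}$ and $\mathcal D(p)=U(A)\cup pU(A)$; it is prime if it is irreducible and $N(p)=p$. *)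

theory Defs
  imports Complex_Main
begin

definition subfield_C :: "complex set \<Rightarrow> bool" where
  "subfield_C F \<longleftrightarrow> 0 \<in> F \<and> 1 \<in> F \<and>
     (\<forall>x\<in>F. \<forall>y\<in>F. x + y \<in> F \<and> x * y \<in> F) \<and>
     (\<forall>x\<in>F. - x \<in> F) \<and> (\<forall>x\<in>F. x \<noteq> 0 \<longrightarrow> inverse x \<in> F)"

definition abs_value_on :: "complex set \<Rightarrow> (complex \<Rightarrow> real) \<Rightarrow> bool" where
  "abs_value_on F nF \<longleftrightarrow>
     (\<forall>x\<in>F. nF x \<ge> 0 \<and> (nF x = 0 \<longleftrightarrow> x = 0)) \<and>
     (\<forall>x\<in>F. \<forall>y\<in>F. nF (x * y) = nF x * nF y \<and> nF (x + y) \<le> nF x + nF y)"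

definition subring_of :: "complex set \<Rightarrow> complex set \<Rightarrow> bool" where
  "subring_of A F \<longleftrightarrow> A \<subseteq> F \<and> 0 \<in> A \<and> 1 \<in> A \<and>
     (\<forall>x\<in>A. \<forall>y\<in>A. x + y \<in> A \<and> x * y \<in> A) \<and> (\<forall>x\<in>A. - x \<in> A)"

definition units :: "complex set \<Rightarrow> complex set" ("U") where
  "U A = {u \<in> A. \<exists>v\<in>A. u * v = 1}"

definition rdvd :: "complex set \<Rightarrow> complex \<Rightarrow> complex \<Rightarrow> bool" where
  "rdvd A d x \<longleftrightarrow> (\<exists>c\<in>A. x = d * c)"

definition divisors :: "complex set \<Rightarrow> complex \<Rightarrow> complex set" ("\<D>") where
  "\<D> A x = {d \<in> A. rdvd A d x}"

definition assoc_set :: "complex set \<Rightarrow> complex \<Rightarrow> complex set" where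
  "assoc_set A x = {x * u | u. u \<in> U A}"

definition N_map :: "complex set \<Rightarrow> complex set \<Rightarrow> (complex \<Rightarrow> real) \<Rightarrow> (complex \<Rightarrow> complex) \<Rightarrow> bool" where
  "N_map F A nF N \<longleftrightarrow>
     (\<forall>a\<in>A. N a \<in> F \<and> N a \<in> \<real>) \<and>
     (\<forall>a\<in>A. a \<noteq> 0 \<longrightarrow> N a \<noteq> 0) \<and>
     (\<forall>x\<in>A. N x \<in> A \<and> \<D> A (N x) = \<D> A x \<and> N (N x) = N x) \<and>
     (\<forall>x\<in>A. \<forall>y\<in>A. \<exists>z\<in>A. N x + N y = N z) \<and>
     (\<forall>x\<in>A. N (- x) = N x) \<and>
     (\<forall>x\<in>A. \<forall>y\<in>A. N (x * y) = N x * N y) \<and>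
     (\<forall>x\<in>A. complex_of_real (nF (N x)) = N x) \<and>
     (\<forall>x\<in>A. x \<noteq> 0 \<longrightarrow> (\<exists>x'. x' \<in> F \<and> x' \<in> \<real> \<and> (N x)\<^sup>2 = x * x' \<and> x * x' \<in> A))"

definition irreducible_in :: "complex set \<Rightarrow> complex \<Rightarrow> bool" where
  "irreducible_in A p \<longleftrightarrow> p \<in> A \<and> p \<notin> U A \<union> {0} \<and> \<D> A p = U A \<union> assoc_set A p"

definition prime_in :: "complex set \<Rightarrow> (complex \<Rightarrow> complex) \<Rightarrow> complex \<Rightarrow> bool" where
  "prime_in A N p \<longleftrightarrow> irreducible_in A p \<and> N p = p"

end

theory Submission
  imports Defs
begin

lemma rdvd_trans:
  assumes "subring_of A F" "rdvd A a b" "rdvd A b c" shows "rdvd A a c"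
proof -
  obtain s where s: "s \<in> A" "b = a * s" using assms(2) by (auto simp: rdvd_def)
  obtain t where t: "t \<in> A" "c = b * t" using assms(3) by (auto simp: rdvd_def)
  have "s * t \<in> A" using assms(1) s t by (auto simp: subring_of_def)
  thus ?thesis using s t by (auto simp: rdvd_def mult.assoc)
qed

lemma D_mono:
  assumes "subring_of A F" "rdvd A e d" shows "\<D> A e \<subseteq> \<D> A d"
  using assms rdvd_trans by (auto simp: divisors_def)

lemma unit_dvd:
  assumes "subring_of A F" "u \<in> U A" "y \<in> A" shows "rdvd A u y"
proof -
  obtain v where v: "v \<in> A" "u * v = 1" using assms(2) by (auto simp: units_def)
  have "v * y \<in> A" using assms(1) v assms(3) by (auto simp: subring_of_def)
  moreover have "y = u * (v * y)" using v by (simp add: mult.assoc[symmetric])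
  ultimately show ?thesis unfolding rdvd_def by blast
qed

lemma irreducible_divisor:
  assumes R: "subring_of A F" and x: "x \<in> A - (U A \<union> {0})" and fin: "finite (\<D> A x)"
  shows "\<exists>q. irreducible_in A q \<and> rdvd A q x"
proof -
  have A1: "1 \<in> A" using R by (simp add: subring_of_def)
  have mulA: "\<And>a b. a \<in> A \<Longrightarrow> b \<in> A \<Longrightarrow> a * b \<in> A" using R by (simp add: subring_of_def)
  define S where "S = {d \<in> \<D> A x. d \<notin> U A}"
  have xS: "x \<in> S" using x A1 by (auto simp: S_def divisors_def rdvd_def intro!: bexI[of _ 1])
  define n where "n = (LEAST n. \<exists>d\<in>S. card (\<D> A d) = n)"
  have "\<exists>d\<in>S. card (\<D> A d) = n" unfolding n_def
    by (rule LeastI_ex) (use xS in blast)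
  then obtain d where dS: "d \<in> S" and dn: "card (\<D> A d) = n" by blast
  have nmin: "\<And>e. e \<in> S \<Longrightarrow> n \<le> card (\<D> A e)" unfolding n_def
    by (rule Least_le) blast
  have dA: "d \<in> A" and ddx: "rdvd A d x" and dU: "d \<notin> U A" using dS by (auto simp: S_def divisors_def)
  have d0: "d \<noteq> 0" using ddx x by (auto simp: rdvd_def)
  have Dd_fin: "finite (\<D> A d)" using D_mono[OF R ddx] fin finite_subset by blast
  have "\<D> A d = U A \<union> assoc_set A d"
  proof
    show "U A \<union> assoc_set A d \<subseteq> \<D> A d"
    proof
      fix e assume "e \<in> U A \<union> assoc_set A d"
      then show "e \<in> \<D> A d"
      proof
        assume "e \<in> U A" thus ?thesis using unit_dvd[OF R _ dA] by (auto simp: divisors_def units_def)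
      next
        assume "e \<in> assoc_set A d"
        then obtain u where u: "u \<in> U A" "e = d * u" by (auto simp: assoc_set_def)
        obtain v where v: "v \<in> A" "u * v = 1" "u \<in> A" using u by (auto simp: units_def)
        have "d = e * v" using u v by (simp add: mult.assoc)
        thus ?thesis using u v dA mulA by (auto simp: divisors_def rdvd_def)
      qed
    qed
  next
    show "\<D> A d \<subseteq> U A \<union> assoc_set A d"
    proof
      fix e assume eD: "e \<in> \<D> A d"
      show "e \<in> U A \<union> assoc_set A d"
      proof (cases "e \<in> U A")
        case True thus ?thesis by simp
      next
        case False
        have eA: "e \<in> A" and ed: "rdvd A e d" using eD by (auto simp: divisors_def)
        have ex: "rdvd A e x" using rdvd_trans[OF R ed ddx] .
        hence eS: "e \<in> S" using False eA by (auto simp: S_def divisors_def)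
        have sub: "\<D> A e \<subseteq> \<D> A d" using D_mono[OF R ed] .
        have "card (\<D> A d) \<le> card (\<D> A e)" using nmin[OF eS] dn by simp
        hence "card (\<D> A e) = card (\<D> A d)" using card_mono[OF Dd_fin sub] by linarith
        hence "\<D> A e = \<D> A d" by (rule card_subset_eq[OF Dd_fin sub])
        moreover have "d \<in> \<D> A d" using dA A1 by (auto simp: divisors_def rdvd_def intro!: bexI[of _ 1])
        ultimately have "rdvd A d e" by (auto simp: divisors_def)
        then obtain c where c: "c \<in> A" "e = d * c" by (auto simp: rdvd_def)
        obtain c' where c': "c' \<in> A" "d = e * c'" using ed by (auto simp: rdvd_def)
        have "d = d * c * c'" using c'(2) by (subst (asm) c(2))
        hence "d * 1 = d * (c * c')" by (simp only: mult.assoc mult_1_right)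
        hence "c * c' = 1" using d0 by (metis mult_left_cancel)
        hence "c \<in> U A" using c c' by (auto simp: units_def)
        thus ?thesis using c by (auto simp: assoc_set_def)
      qed
    qed
  qed
  hence "irreducible_in A d" using dA dU d0 by (simp add: irreducible_in_def)
  thus ?thesis using ddx by blast
qed

theorem mainTheorem8:
  fixes F A :: "complex set" and nF :: "complex \<Rightarrow> real" and N :: "complex \<Rightarrow> complex"
  assumes "subfield_C F"
    and "abs_value_on F nF"
    and "subring_of A F"
    and "N_map F A nF N"
    and "\<exists>p\<in>A. prime_in A N p"
    and "finite (U A)"
    and "x \<in> A - (U A \<union> {0})"
    and "finite (\<D> A x)"
  shows "\<exists>p\<in>A. prime_in A N p \<and> rdvd A p x"
proof -
  note R = assms(3)
  have mulA: "\<And>a b. a \<in> A \<Longrightarrow> b \<in> A \<Longrightarrow> a * b \<in> A" using R by (simp add: subring_of_def)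
  obtain q where q: "irreducible_in A q" "rdvd A q x" using irreducible_divisor[OF R assms(7,8)] by blast
  have qA: "q \<in> A" and qU: "q \<notin> U A" "q \<noteq> 0" and Dq: "\<D> A q = U A \<union> assoc_set A q"
    using q(1) by (auto simp: irreducible_in_def)
  have NA: "N q \<in> A" and DN: "\<D> A (N q) = \<D> A q" and NN: "N (N q) = N q" and N0: "N q \<noteq> 0"
    using assms(4) qA qU by (auto simp: N_map_def)
  have "N q \<in> \<D> A (N q)" using NA R by (auto simp: divisors_def rdvd_def subring_of_def intro!: bexI[of _ 1])
  hence NqD: "N q \<in> U A \<union> assoc_set A q" using DN Dq by simp
  have NqnU: "N q \<notin> U A"
  proof
    assume "N q \<in> U A"
    then obtain v where v: "v \<in> A" "N q * v = 1" by (auto simp: units_def)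
    have "q \<in> \<D> A q" using qA R by (auto simp: divisors_def rdvd_def subring_of_def intro!: bexI[of _ 1])
    hence "q \<in> \<D> A (N q)" using DN by simp
    then obtain c where c: "c \<in> A" "N q = q * c" by (auto simp: divisors_def rdvd_def)
    have "q * (c * v) = 1" using c v by (simp add: mult.assoc)
    thus False using qA qU c v mulA by (auto simp: units_def)
  qed
  then obtain u where u: "u \<in> U A" "N q = q * u" using NqD by (auto simp: assoc_set_def)
  obtain v where v: "v \<in> A" "u * v = 1" "u \<in> A" using u by (auto simp: units_def)
  have vU: "v \<in> U A" using v by (auto simp: units_def mult.commute)
  have qeq: "q = N q * v" using u v by (simp add: mult.assoc)
  have assoc_eq: "assoc_set A (N q) = assoc_set A q"
  proof
    show "assoc_set A (N q) \<subseteq> assoc_set A q"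
    proof
      fix y assume "y \<in> assoc_set A (N q)"
      then obtain w where w: "w \<in> U A" "y = N q * w" by (auto simp: assoc_set_def)
      obtain w' where w': "w' \<in> A" "w * w' = 1" "w \<in> A" using w by (auto simp: units_def)
      have "(u * w) * (w' * v) = u * (w * w') * v" by (simp only: mult.assoc)
      hence "(u * w) * (w' * v) = 1" using v w' by simp
      moreover have "w' * v \<in> A" "u * w \<in> A" using mulA v w' by auto
      ultimately have "u * w \<in> U A" unfolding units_def by blast
      thus "y \<in> assoc_set A q" using w u by (auto simp: assoc_set_def mult.assoc)
    qed
  next
    show "assoc_set A q \<subseteq> assoc_set A (N q)"
    proof
      fix y assume "y \<in> assoc_set A q"
      then obtain w where w: "w \<in> U A" "y = q * w" by (auto simp: assoc_set_def)
      obtain w' where w': "w' \<in> A" "w * w' = 1" "w \<in> A" using w by (auto simp: units_def)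
      have "v * (w * w') * u = 1" using v w' by (simp add: mult.commute[of v u])
      hence "(v * w) * (w' * u) = 1" by (simp only: mult.assoc)
      moreover have "w' * u \<in> A" "v * w \<in> A" using mulA v w' by auto
      ultimately have "v * w \<in> U A" unfolding units_def by blast
      moreover have "y = N q * (v * w)" using w(2) qeq by (simp add: mult.assoc)
      ultimately show "y \<in> assoc_set A (N q)" unfolding assoc_set_def by blast
    qed
  qed
  have "irreducible_in A (N q)" using NA NqnU N0 DN Dq assoc_eq by (simp add: irreducible_in_def)
  hence P: "prime_in A N (N q)" using NN by (simp add: prime_in_def)
  have "rdvd A (N q) q" using qeq v by (auto simp: rdvd_def)
  hence "rdvd A (N q) x" using rdvd_trans[OF R _ q(2)] by blast
  thus ?thesis using P NA by blast
qed

end
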